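(* For every finite set $\Omega$ with $|\Omega|\ge2$, every $\varepsilon>0$ and all integers $k,l\ge1$ there exist $\delta>0$ and $n_0>0$ such that for all $n>n_0$ and all $\mu,\nu\in\mathcal P(\Omega^n)$ with $D_\square(\mu,\nu)<\delta$, every $(k,l)$-intensive observable $f$ satisfies $\big|\langle f(\sigma^{(1)},\dots,\sigma^{(k)})\rangle_\mu-\langle f(\sigma^{(1)},\dots,\sigma^{(k)})\rangle_\nu\big|<\varepsilon$.
   Context: $\mathcal P(\mathcal X)$ denotes the set of probability measures on a finite set $\mathcal X$; $[n]=\{1,\dots,n\}$. A function $f:(\Omega^n)^k\to[0,1]$ is a $(k,l)$-intensive observable if there exist $I_1,\dots,I_l\subset[n]$ and $\tau^{(j)}_1,\dots,\tau^{(j)}_l\in\Omega$ for $j=1,\dots,k$ such that $f(\sigma^{(1)},\dots,\sigma^{(k)})=\frac1{n^l}\sum_{i_1\in I_1,\dots,i_l\in I_l}\prod_{j=1}^k\mathbf 1\{\sigma^{(j)}_{i_1}=\tau^{(j)}_1,\dots,\sigma^{(j)}_{i_l}=\tau^{(j)}_l\}$. For $\mu\in\mathcal P(\Omega^n)$, $\langle f(\sigma^{(1)},\dots,\sigma^{(k)})\rangle_\mu=\sum_{\sigma^{(1)},\dots,\sigma^{(k)}}f(\sigma^{(1)},\dots,\sigma^{(k)})\prod_{j=1}^k\mu(\sigma^{(j)})$ is the expectation over $k$ independent samples from $\mu$. For $\mu,\nu\in\mathcal P(\Omega^n)$ let $\Gamma(\mu,\nu)$ be the set of couplings, i.e. probability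 measures $\gamma$ on $\Omega^n\times\Omega^n$ whose first and second marginals are $\mu$ and $\nu$. The cut metric is $D_\square(\mu,\nu)=\frac1n\min_{\gamma\in\Gamma(\mu,\nu)}\max_{I\subset[n],\,B\subset\Omega^n\times\Omega^n,\,\omega\in\Omega}\Big|\sum_{i\in I}\sum_{(\sigma,\tau)\in B}\gamma(\sigma,\tau)\big(\mathbf 1\{\sigma_i=\omega\}-\mathbf 1\{\tau_i=\omega\}\big)\Big|$. *)

theory Defs
  imports Complex_Main "HOL-Library.FuncSet" "HOL-Library.Cardinality"
begin

text \<open>Configurations in Omega^n, with [n] rendered as {0..<n}; coordinates outside
  [n] are fixed to undefined (PiE).\<close>
definition configs :: "nat \<Rightarrow> (nat \<Rightarrow> 'a) set" where
  "configs n = PiE {..<n} (\<lambda>_. UNIV)"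

definition is_prob :: "nat \<Rightarrow> ((nat \<Rightarrow> 'a) \<Rightarrow> real) \<Rightarrow> bool" where
  "is_prob n \<mu> \<longleftrightarrow> (\<forall>\<sigma>\<in>configs n. 0 \<le> \<mu> \<sigma>) \<and> sum \<mu> (configs n) = 1"

definition couplings :: "nat \<Rightarrow> ((nat \<Rightarrow> 'a) \<Rightarrow> real) \<Rightarrow> ((nat \<Rightarrow> 'a) \<Rightarrow> real)
    \<Rightarrow> (((nat \<Rightarrow> 'a) \<times> (nat \<Rightarrow> 'a)) \<Rightarrow> real) set" where
  "couplings n \<mu> \<nu> = {\<gamma>. (\<forall>p\<in>configs n \<times> configs n. 0 \<le> \<gamma> p)
      \<and> (\<forall>\<sigma>\<in>configs n. (\<Sum>\<tau>\<in>configs n. \<gamma> (\<sigma>, \<tau>)) = \<mu> \<sigma>)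
      \<and> (\<forall>\<tau>\<in>configs n. (\<Sum>\<sigma>\<in>configs n. \<gamma> (\<sigma>, \<tau>)) = \<nu> \<tau>)}"

definition cut_disc :: "nat \<Rightarrow> (((nat \<Rightarrow> 'a) \<times> (nat \<Rightarrow> 'a)) \<Rightarrow> real) \<Rightarrow> real" where
  "cut_disc n \<gamma> = Max {\<bar>\<Sum>i\<in>I. \<Sum>p\<in>B. \<gamma> p *
        ((if fst p i = \<omega> then 1 else 0) - (if snd p i = \<omega> then 1 else 0))\<bar>
      | I B \<omega>. I \<subseteq> {..<n} \<and> B \<subseteq> configs n \<times> configs n}"

text \<open>Cut metric; the minimum over couplings is attained, so Inf equals min.\<close>
definition cut_dist :: "nat \<Rightarrow> ((nat \<Rightarrow> 'a) \<Rightarrow> real) \<Rightarrow> ((nat \<Rightarrow> 'a) \<Rightarrow> real) \<Rightarrow> real" where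
  "cut_dist n \<mu> \<nu> = (1 / real n) * (INF \<gamma>\<in>couplings n \<mu> \<nu>. cut_disc n \<gamma>)"

definition tuples :: "nat \<Rightarrow> nat \<Rightarrow> (nat \<Rightarrow> nat \<Rightarrow> 'a) set" where
  "tuples n k = PiE {..<k} (\<lambda>_. configs n)"

definition intensive_obs :: "nat \<Rightarrow> nat \<Rightarrow> nat \<Rightarrow> ((nat \<Rightarrow> nat \<Rightarrow> 'a) \<Rightarrow> real) \<Rightarrow> bool" where
  "intensive_obs n k l f \<longleftrightarrow> (\<exists>(I :: nat \<Rightarrow> nat set) (\<tau> :: nat \<Rightarrow> nat \<Rightarrow> 'a).
      (\<forall>m<l. I m \<subseteq> {..<n}) \<and>
      (\<forall>\<sigma>\<in>tuples n k. f \<sigma> = (1 / real n ^ l) *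
         (\<Sum>i\<in>PiE {..<l} I. \<Prod>j<k. (if (\<forall>m<l. \<sigma> j (i m) = \<tau> j m) then 1 else 0))))"

definition expect :: "nat \<Rightarrow> nat \<Rightarrow> ((nat \<Rightarrow> 'a) \<Rightarrow> real) \<Rightarrow> ((nat \<Rightarrow> nat \<Rightarrow> 'a) \<Rightarrow> real) \<Rightarrow> real" where
  "expect n k \<mu> f = (\<Sum>\<sigma>\<in>tuples n k. f \<sigma> * (\<Prod>j<k. \<mu> (\<sigma> j)))"

end

theory Submission
  imports Defs
begin

lemma prod_telescope:
  fixes a b :: "nat \<Rightarrow> real"
  shows "(\<Prod>j<k. a j) - (\<Prod>j<k. b j) =
         (\<Sum>j<k. (\<Prod>j'<j. b j') * (a j - b j) * (\<Prod>j'\<in>{j<..<k}. a j'))"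
proof (induction k)
  case 0 then show ?case by simp
next
  case (Suc k)
  have e: "\<And>j. j < k \<Longrightarrow> (\<Prod>j'\<in>{j<..<Suc k}. a j') = (\<Prod>j'\<in>{j<..<k}. a j') * a k"
  proof -
    fix j assume "j < k"
    then have "{j<..<Suc k} = insert k {j<..<k}" by auto
    then show "(\<Prod>j'\<in>{j<..<Suc k}. a j') = (\<Prod>j'\<in>{j<..<k}. a j') * a k" by simp
  qed
  have "(\<Sum>j<Suc k. (\<Prod>j'<j. b j') * (a j - b j) * (\<Prod>j'\<in>{j<..<Suc k}. a j'))
     = (\<Sum>j<k. (\<Prod>j'<j. b j') * (a j - b j) * (\<Prod>j'\<in>{j<..<k}. a j')) * a k
       + (\<Prod>j'<k. b j') * (a k - b k)"
  proof -
    have "{k<..<Suc k} = ({}::nat set)" by auto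
    then show ?thesis by (simp add: e sum_distrib_right mult.assoc)
  qed
  also have "\<dots> = (\<Prod>j<Suc k. a j) - (\<Prod>j<Suc k. b j)"
    using Suc by (simp add: algebra_simps)
  finally show ?case by simp
qed

lemma weighted_bound:
  fixes X c :: "'b \<Rightarrow> real"
  assumes J: "finite J" and c: "\<forall>y\<in>J. 0 \<le> c y \<and> c y \<le> 1"
    and D: "\<forall>J'\<subseteq>J. \<bar>sum X J'\<bar> \<le> D"
  shows "\<bar>\<Sum>y\<in>J. c y * X y\<bar> \<le> D"
proof -
  define Jp where "Jp = {y\<in>J. X y > 0}"
  define Jn where "Jn = {y\<in>J. \<not> X y > 0}"
  have JU: "J = Jp \<union> Jn" and dis: "Jp \<inter> Jn = {}" and fp: "finite Jp" and fn: "finite Jn"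
    using J unfolding Jp_def Jn_def by auto
  have sp: "(\<Sum>y\<in>J. c y * X y) = (\<Sum>y\<in>Jp. c y * X y) + (\<Sum>y\<in>Jn. c y * X y)"
    by (subst JU, rule sum.union_disjoint[OF fp fn dis])
  have p1: "(\<Sum>y\<in>Jp. c y * X y) \<le> sum X Jp"
    by (rule sum_mono) (use c in \<open>auto simp: Jp_def intro!: mult_left_le_one_le\<close>)
  have p0: "0 \<le> (\<Sum>y\<in>Jp. c y * X y)"
    by (rule sum_nonneg) (use c in \<open>auto simp: Jp_def\<close>)
  have n1: "sum X Jn \<le> (\<Sum>y\<in>Jn. c y * X y)"
  proof (rule sum_mono)
    fix y assume y: "y \<in> Jn"
    then have "X y \<le> 0" "0 \<le> c y" "c y \<le> 1" using c by (auto simp: Jn_def)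
    then show "X y \<le> c y * X y"
      by (metis mult_left_mono_neg mult.right_neutral mult.commute)
  qed
  have n0: "(\<Sum>y\<in>Jn. c y * X y) \<le> 0"
    by (rule sum_nonpos) (use c in \<open>auto simp: Jn_def mult_nonneg_nonpos\<close>)
  have "\<bar>sum X Jp\<bar> \<le> D" "\<bar>sum X Jn\<bar> \<le> D" using D by (auto simp: Jp_def Jn_def)
  then show ?thesis using sp p1 p0 n1 n0 by linarith
qed

lemma sum_PiE_split:
  assumes "m \<in> S"
  shows "sum F (PiE S I) = (\<Sum>g\<in>PiE (S-{m}) I. \<Sum>y\<in>I m. F (g(m:=y)))"
proof -
  have S: "S = insert m (S-{m})" using assms by auto
  have "sum F (PiE S I) = sum F ((\<lambda>(y, g). g(m := y)) ` (I m \<times> PiE (S-{m}) I))"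
    by (subst S, subst PiE_insert_eq, rule refl)
  also have "\<dots> = sum (F \<circ> (\<lambda>(y, g). g(m := y))) (I m \<times> PiE (S-{m}) I)"
    by (rule sum.reindex) (rule inj_combinator, simp)
  also have "\<dots> = (\<Sum>y\<in>I m. \<Sum>g\<in>PiE (S-{m}) I. F (g(m:=y)))"
    by (simp add: sum.cartesian_product split_def o_def)
  also have "\<dots> = (\<Sum>g\<in>PiE (S-{m}) I. \<Sum>y\<in>I m. F (g(m:=y)))"
    by (rule sum.swap)
  finally show ?thesis .
qed

lemma card_PiE_le:
  assumes "\<forall>m<l. I m \<subseteq> {..<n}" "m0 < l"
  shows "card (PiE ({..<l}-{m0}) I) \<le> n ^ (l-1)"
proof -
  have "card (PiE ({..<l}-{m0}) I) = (\<Prod>i\<in>{..<l}-{m0}. card (I i))"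
    by (rule card_PiE) simp
  also have "\<dots> \<le> (\<Prod>i\<in>{..<l}-{m0}. n)"
    by (rule prod_mono) (use assms in \<open>auto intro: card_mono[of "{..<n}", simplified]\<close>)
  also have "\<dots> = n ^ (l-1)" using assms(2) by simp
  finally show ?thesis .
qed

lemma prod_ind:
  "finite A \<Longrightarrow> (\<Prod>x\<in>A. if P x then 1 else (0::real)) = (if \<forall>x\<in>A. P x then 1 else 0)"
  by (induction A rule: finite_induct) auto

lemma finite_configs: "finite (configs n :: (nat \<Rightarrow> 'a::finite) set)"
  unfolding configs_def by (rule finite_PiE) auto

lemma cut_disc_ge:
  fixes \<gamma> :: "((nat \<Rightarrow> 'a::finite) \<times> (nat \<Rightarrow> 'a)) \<Rightarrow> real"
  assumes "I \<subseteq> {..<n}" "B \<subseteq> configs n \<times> configs n"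
  shows "\<bar>\<Sum>i\<in>I. \<Sum>p\<in>B. \<gamma> p *
        ((if fst p i = \<omega> then 1 else 0) - (if snd p i = \<omega> then 1 else 0))\<bar> \<le> cut_disc n \<gamma>"
proof -
  let ?h = "\<lambda>(I, B, \<omega>). \<bar>\<Sum>i\<in>I. \<Sum>p\<in>B. \<gamma> p *
        ((if fst p i = \<omega> then 1 else 0) - (if snd p i = (\<omega>::'a) then 1 else 0))\<bar>"
  have eq: "{\<bar>\<Sum>i\<in>I. \<Sum>p\<in>B. \<gamma> p *
        ((if fst p i = \<omega> then 1 else 0) - (if snd p i = \<omega> then 1 else 0))\<bar>
      | I B \<omega>. I \<subseteq> {..<n} \<and> B \<subseteq> configs n \<times> configs n}
      = ?h ` (Pow {..<n} \<times> Pow (configs n \<times> configs n) \<times> UNIV)"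
    by (auto simp: image_def)
  have fin: "finite (?h ` (Pow {..<n} \<times> Pow (configs n \<times> configs n) \<times> UNIV))"
    by (intro finite_imageI finite_cartesian_product finite_Pow_iff[THEN iffD2] finite_configs) auto
  show ?thesis unfolding cut_disc_def eq
    by (rule Max_ge[OF fin], rule image_eqI[where x="(I,B,\<omega>)"]) (use assms in auto)
qed

lemma cut_disc_nonneg: "0 \<le> cut_disc n (\<gamma> :: ((nat \<Rightarrow> 'a::finite) \<times> (nat \<Rightarrow> 'a)) \<Rightarrow> real)"
  using cut_disc_ge[of "{}" n "{}" \<gamma>] by simp

lemma marg1:
  assumes "\<gamma> \<in> couplings n \<mu> \<nu>"
  shows "(\<Sum>\<sigma>\<in>configs n. \<mu> \<sigma> * g \<sigma>) = (\<Sum>p\<in>configs n \<times> configs n. \<gamma> p * g (fst p))"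
proof -
  have "(\<Sum>\<sigma>\<in>configs n. \<mu> \<sigma> * g \<sigma>) = (\<Sum>\<sigma>\<in>configs n. (\<Sum>\<tau>\<in>configs n. \<gamma> (\<sigma>, \<tau>)) * g \<sigma>)"
    using assms unfolding couplings_def by (intro sum.cong) auto
  also have "\<dots> = (\<Sum>\<sigma>\<in>configs n. \<Sum>\<tau>\<in>configs n. \<gamma> (\<sigma>, \<tau>) * g \<sigma>)"
    by (simp add: sum_distrib_right)
  also have "\<dots> = (\<Sum>p\<in>configs n \<times> configs n. \<gamma> p * g (fst p))"
    by (simp add: sum.cartesian_product split_def)
  finally show ?thesis .
qed

lemma marg2:
  assumes "\<gamma> \<in> couplings n \<mu> \<nu>"
  shows "(\<Sum>\<tau>\<in>configs n. \<nu> \<tau> * g \<tau>) = (\<Sum>p\<in>configs n \<times> configs n. \<gamma> p * g (snd p))"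
proof -
  have "(\<Sum>\<tau>\<in>configs n. \<nu> \<tau> * g \<tau>) = (\<Sum>\<tau>\<in>configs n. (\<Sum>\<sigma>\<in>configs n. \<gamma> (\<sigma>, \<tau>)) * g \<tau>)"
    using assms unfolding couplings_def by (intro sum.cong) auto
  also have "\<dots> = (\<Sum>\<tau>\<in>configs n. \<Sum>\<sigma>\<in>configs n. \<gamma> (\<sigma>, \<tau>) * g \<tau>)"
    by (simp add: sum_distrib_right)
  also have "\<dots> = (\<Sum>\<sigma>\<in>configs n. \<Sum>\<tau>\<in>configs n. \<gamma> (\<sigma>, \<tau>) * g \<tau>)"
    by (rule sum.swap)
  also have "\<dots> = (\<Sum>p\<in>configs n \<times> configs n. \<gamma> p * g (snd p))"
    by (simp add: sum.cartesian_product split_def)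
  finally show ?thesis .
qed

lemma prob_ind_01:
  assumes "is_prob n \<mu>"
  shows "0 \<le> (\<Sum>\<sigma>\<in>configs n. \<mu> \<sigma> * (\<Prod>m<l. if P \<sigma> m then 1 else (0::real)))
    \<and> (\<Sum>\<sigma>\<in>configs n. \<mu> \<sigma> * (\<Prod>m<l. if P \<sigma> m then 1 else (0::real))) \<le> 1"
proof -
  have h: "\<And>\<sigma>. 0 \<le> (\<Prod>m<l. if P \<sigma> m then 1 else (0::real)) \<and> (\<Prod>m<l. if P \<sigma> m then 1 else (0::real)) \<le> 1"
    by (auto intro!: prod_nonneg prod_le_1)
  have "(\<Sum>\<sigma>\<in>configs n. \<mu> \<sigma> * (\<Prod>m<l. if P \<sigma> m then 1 else (0::real))) \<le> (\<Sum>\<sigma>\<in>configs n. \<mu> \<sigma>)"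
    using assms h unfolding is_prob_def by (intro sum_mono) (simp add: mult_left_le)
  moreover have "0 \<le> (\<Sum>\<sigma>\<in>configs n. \<mu> \<sigma> * (\<Prod>m<l. if P \<sigma> m then 1 else (0::real)))"
    using assms h unfolding is_prob_def by (intro sum_nonneg) simp
  ultimately show ?thesis using assms unfolding is_prob_def by simp
qed

lemma W01:
  fixes W :: real
  assumes "W = (\<Prod>m'\<in>SA. if P1 m' then 1 else 0) * (\<Prod>m'\<in>SB. if P2 m' then 1 else 0)"
    "finite SA" "finite SB"
  shows "W = 0 \<or> W = 1"
  using assms by (simp add: prod_ind)

lemma main_bound:
  fixes \<mu> \<nu> :: "(nat \<Rightarrow> 'a::finite) \<Rightarrow> real" and \<gamma> :: "((nat \<Rightarrow> 'a) \<times> (nat \<Rightarrow> 'a)) \<Rightarrow> real"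
    and I :: "nat \<Rightarrow> nat set" and \<tau> :: "nat \<Rightarrow> nat \<Rightarrow> 'a"
  assumes pm: "is_prob n \<mu>" and pn: "is_prob n \<nu>" and g: "\<gamma> \<in> couplings n \<mu> \<nu>"
    and I: "\<forall>m<l. I m \<subseteq> {..<n}"
  shows "\<bar>\<Sum>i\<in>PiE {..<l} I.
      (\<Prod>j<k. \<Sum>\<sigma>\<in>configs n. \<mu> \<sigma> * (\<Prod>m<l. if \<sigma> (i m) = \<tau> j m then 1 else 0))
    - (\<Prod>j<k. \<Sum>\<sigma>\<in>configs n. \<nu> \<sigma> * (\<Prod>m<l. if \<sigma> (i m) = \<tau> j m then 1 else 0))\<bar>
    \<le> real k * real l * real n ^ (l-1) * cut_disc n \<gamma>"
proof -
  define C where "C = (configs n :: (nat \<Rightarrow> 'a) set)"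
  define P where "P = PiE {..<l} I"
  define D where "D = cut_disc n \<gamma>"
  define x where "x j (i::nat\<Rightarrow>nat) (s::nat\<Rightarrow>'a) m = (if s (i m) = \<tau> j m then 1 else (0::real))" for j i s m
  define a where "a i j = (\<Sum>\<sigma>\<in>C. \<mu> \<sigma> * (\<Prod>m<l. x j i \<sigma> m))" for i j
  define b where "b i j = (\<Sum>\<sigma>\<in>C. \<nu> \<sigma> * (\<Prod>m<l. x j i \<sigma> m))" for i j
  define W where "W j m i p = (\<Prod>m'<m. x j i (snd p) m') * (\<Prod>m'\<in>{m<..<l}. x j i (fst p) m')"
    for j m i p
  define \<Delta> where "\<Delta> j m (y::nat) (p::(nat\<Rightarrow>'a)\<times>(nat\<Rightarrow>'a)) = (if fst p y = \<tau> j m then 1 else 0) - (if snd p y = \<tau> j m then 1 else (0::real))"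
    for j m y p
  define A where "A j i = (\<Prod>j'<j. b i j') * (\<Prod>j'\<in>{j<..<k}. a i j')" for j i
  define T where "T j m = (\<Sum>i\<in>P. A j i * (\<Sum>p\<in>C\<times>C. \<gamma> p * W j m i p * \<Delta> j m (i m) p))" for j m
  have ab01: "0 \<le> a i j \<and> a i j \<le> 1 \<and> 0 \<le> b i j \<and> b i j \<le> 1" for i j
    using prob_ind_01[OF pm, where l=l and P="\<lambda>\<sigma> m. \<sigma> (i m) = \<tau> j m"]
      prob_ind_01[OF pn, where l=l and P="\<lambda>\<sigma> m. \<sigma> (i m) = \<tau> j m"]
    unfolding a_def b_def x_def C_def by simp
  have A01: "0 \<le> A j i \<and> A j i \<le> 1" for j i
    unfolding A_def using ab01
    by (intro conjI mult_nonneg_nonneg mult_le_one prod_nonneg prod_le_1) auto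
  have fact1: "a i j - b i j = (\<Sum>m<l. \<Sum>p\<in>C\<times>C. \<gamma> p * W j m i p * \<Delta> j m (i m) p)" for i j
  proof -
    have "a i j - b i j = (\<Sum>p\<in>C\<times>C. \<gamma> p * (\<Prod>m<l. x j i (fst p) m))
         - (\<Sum>p\<in>C\<times>C. \<gamma> p * (\<Prod>m<l. x j i (snd p) m))"
      unfolding a_def b_def C_def by (simp add: marg1[OF g] marg2[OF g])
    also have "\<dots> = (\<Sum>p\<in>C\<times>C. \<gamma> p * ((\<Prod>m<l. x j i (fst p) m) - (\<Prod>m<l. x j i (snd p) m)))"
      by (simp add: sum_subtractf right_diff_distrib)
    also have "\<dots> = (\<Sum>p\<in>C\<times>C. \<Sum>m<l. \<gamma> p * W j m i p * \<Delta> j m (i m) p)"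
    proof (rule sum.cong[OF refl])
      fix p
      show "\<gamma> p * ((\<Prod>m<l. x j i (fst p) m) - (\<Prod>m<l. x j i (snd p) m))
          = (\<Sum>m<l. \<gamma> p * W j m i p * \<Delta> j m (i m) p)"
        unfolding prod_telescope sum_distrib_left W_def \<Delta>_def x_def
        by (intro sum.cong refl) (simp add: algebra_simps)
    qed
    also have "\<dots> = (\<Sum>m<l. \<Sum>p\<in>C\<times>C. \<gamma> p * W j m i p * \<Delta> j m (i m) p)"
      by (rule sum.swap)
    finally show ?thesis .
  qed
  have fact2: "(\<Prod>j<k. a i j) - (\<Prod>j<k. b i j) = (\<Sum>j<k. A j i * (a i j - b i j))" for i
    unfolding prod_telescope A_def by (intro sum.cong refl) (simp add: algebra_simps)
  have total: "(\<Sum>i\<in>P. (\<Prod>j<k. a i j) - (\<Prod>j<k. b i j)) = (\<Sum>j<k. \<Sum>m<l. T j m)"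
  proof -
    have "(\<Sum>i\<in>P. (\<Prod>j<k. a i j) - (\<Prod>j<k. b i j))
        = (\<Sum>i\<in>P. \<Sum>j<k. \<Sum>m<l. A j i * (\<Sum>p\<in>C\<times>C. \<gamma> p * W j m i p * \<Delta> j m (i m) p))"
      by (simp add: fact2 fact1 sum_distrib_left)
    also have "\<dots> = (\<Sum>j<k. \<Sum>i\<in>P. \<Sum>m<l. A j i * (\<Sum>p\<in>C\<times>C. \<gamma> p * W j m i p * \<Delta> j m (i m) p))"
      by (rule sum.swap)
    also have "\<dots> = (\<Sum>j<k. \<Sum>m<l. T j m)"
      unfolding T_def by (intro sum.cong refl sum.swap)
    finally show ?thesis .
  qed
  have Dnn: "0 \<le> D" unfolding D_def by (rule cut_disc_nonneg)
  have Tb: "\<bar>T j m\<bar> \<le> real n ^ (l-1) * D" if jm: "j < k" "m < l" for j m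
  proof -
    define R where "R = PiE ({..<l}-{m}) I"
    have Wu: "W j m (g(m:=y)) p = W j m g p" for g y p
      unfolding W_def x_def by (intro arg_cong2[where f="(*)"] prod.cong) auto
    have T1: "T j m = (\<Sum>g\<in>R. \<Sum>y\<in>I m. A j (g(m:=y)) * (\<Sum>p\<in>C\<times>C. \<gamma> p * W j m g p * \<Delta> j m y p))"
      unfolding T_def P_def R_def
      by (subst sum_PiE_split[of m]) (use jm in \<open>simp_all add: Wu\<close>)
    have inner: "\<bar>\<Sum>y\<in>I m. A j (g(m:=y)) * (\<Sum>p\<in>C\<times>C. \<gamma> p * W j m g p * \<Delta> j m y p)\<bar> \<le> D" for g
    proof (rule weighted_bound)
      show fI: "finite (I m)" using I jm by (meson finite_lessThan finite_subset)
      show "\<forall>y\<in>I m. 0 \<le> A j (g(m := y)) \<and> A j (g(m := y)) \<le> 1" using A01 by simp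
      define B where "B = {p\<in>C\<times>C. W j m g p = 1}"
      have W01': "W j m g p = 0 \<or> W j m g p = 1" for p
        by (rule W01[where SA="{..<m}" and SB="{m<..<l}"]) (auto simp: W_def x_def)
      have eqB: "(\<Sum>p\<in>C\<times>C. \<gamma> p * W j m g p * \<Delta> j m y p) = (\<Sum>p\<in>B. \<gamma> p * \<Delta> j m y p)" for y
      proof -
        have "(\<Sum>p\<in>C\<times>C. \<gamma> p * W j m g p * \<Delta> j m y p)
            = (\<Sum>p\<in>C\<times>C. if W j m g p = 1 then \<gamma> p * \<Delta> j m y p else 0)"
          by (intro sum.cong refl) (use W01' in auto)
        also have "\<dots> = (\<Sum>p\<in>B. \<gamma> p * \<Delta> j m y p)"
          unfolding B_def C_def
          by (rule sum.inter_filter[symmetric]) (intro finite_cartesian_product finite_configs)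
        finally show ?thesis .
      qed
      show "\<forall>J'\<subseteq>I m. \<bar>sum (\<lambda>y. \<Sum>p\<in>C \<times> C. \<gamma> p * W j m g p * \<Delta> j m y p) J'\<bar> \<le> D"
      proof (intro allI impI)
        fix J' assume "J' \<subseteq> I m"
        then have J': "J' \<subseteq> {..<n}" using I jm by blast
        have B: "B \<subseteq> configs n \<times> configs n" unfolding B_def C_def by auto
        show "\<bar>sum (\<lambda>y. \<Sum>p\<in>C \<times> C. \<gamma> p * W j m g p * \<Delta> j m y p) J'\<bar> \<le> D"
        proof -
          have "sum (\<lambda>y. \<Sum>p\<in>C \<times> C. \<gamma> p * W j m g p * \<Delta> j m y p) J'
              = (\<Sum>y\<in>J'. \<Sum>p\<in>B. \<gamma> p * \<Delta> j m y p)"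
            by (rule sum.cong[OF refl], rule eqB)
          then show ?thesis unfolding D_def using cut_disc_ge[OF J' B, of \<gamma> "\<tau> j m"]
            by (simp add: \<Delta>_def)
        qed
      qed
    qed
    have "\<bar>T j m\<bar> \<le> (\<Sum>g\<in>R. \<bar>\<Sum>y\<in>I m. A j (g(m:=y)) * (\<Sum>p\<in>C\<times>C. \<gamma> p * W j m g p * \<Delta> j m y p)\<bar>)"
      unfolding T1 by (rule sum_abs)
    also have "\<dots> \<le> (\<Sum>g\<in>R. D)" by (rule sum_mono) (rule inner)
    also have "\<dots> = real (card R) * D" by simp
    also have "\<dots> \<le> real n ^ (l-1) * D"
      using card_PiE_le[OF I jm(2)] Dnn unfolding R_def
      by (intro mult_right_mono) (simp_all add: of_nat_power[symmetric] del: of_nat_power)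
    finally show ?thesis .
  qed
  have "\<bar>\<Sum>j<k. \<Sum>m<l. T j m\<bar> \<le> (\<Sum>j<k. \<Sum>m<l. \<bar>T j m\<bar>)"
    by (rule order_trans[OF sum_abs]) (intro sum_mono sum_abs)
  also have "\<dots> \<le> (\<Sum>j<k. \<Sum>m<l. real n ^ (l-1) * D)"
    by (intro sum_mono Tb) auto
  also have "\<dots> = real k * real l * real n ^ (l-1) * D" by simp
  finally have fin: "\<bar>\<Sum>i\<in>P. (\<Prod>j<k. a i j) - (\<Prod>j<k. b i j)\<bar> \<le> real k * real l * real n ^ (l-1) * D"
    unfolding total .
  show ?thesis using fin unfolding P_def a_def b_def x_def C_def D_def .
qed

lemma expect_eq:
  fixes \<mu> :: "(nat \<Rightarrow> 'a::finite) \<Rightarrow> real" and I :: "nat \<Rightarrow> nat set" and \<tau> :: "nat \<Rightarrow> nat \<Rightarrow> 'a"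
  assumes f: "\<forall>\<sigma>\<in>tuples n k. f \<sigma> = (1 / real n ^ l) *
         (\<Sum>i\<in>PiE {..<l} I. \<Prod>j<k. (if (\<forall>m<l. \<sigma> j (i m) = \<tau> j m) then 1 else 0))"
  shows "expect n k \<mu> f = (1 / real n ^ l) * (\<Sum>i\<in>PiE {..<l} I.
      \<Prod>j<k. \<Sum>\<sigma>\<in>configs n. \<mu> \<sigma> * (\<Prod>m<l. if \<sigma> (i m) = \<tau> j m then 1 else 0))"
proof -
  have ind: "(if (\<forall>m<l. s (i m) = \<tau> j m) then 1 else (0::real)) = (\<Prod>m<l. if s (i m) = \<tau> j m then 1 else 0)"
    for s i j using prod_ind[of "{..<l}" "\<lambda>m. s (i m) = \<tau> j m"] by simp
  have "expect n k \<mu> f = (\<Sum>\<sigma>\<in>tuples n k. (1 / real n ^ l) *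
         (\<Sum>i\<in>PiE {..<l} I. \<Prod>j<k. (if (\<forall>m<l. \<sigma> j (i m) = \<tau> j m) then 1 else 0)) * (\<Prod>j<k. \<mu> (\<sigma> j)))"
    unfolding expect_def using f by (intro sum.cong) auto
  also have "\<dots> = (1 / real n ^ l) * (\<Sum>i\<in>PiE {..<l} I. \<Sum>\<sigma>\<in>tuples n k.
       \<Prod>j<k. \<mu> (\<sigma> j) * (\<Prod>m<l. if \<sigma> j (i m) = \<tau> j m then 1 else 0))"
    by (simp add: ind sum_distrib_left sum_distrib_right prod.distrib mult.commute mult.left_commute mult.assoc
        sum.swap[of _ "tuples n k"])
  also have "\<dots> = (1 / real n ^ l) * (\<Sum>i\<in>PiE {..<l} I.
      \<Prod>j<k. \<Sum>\<sigma>\<in>configs n. \<mu> \<sigma> * (\<Prod>m<l. if \<sigma> (i m) = \<tau> j m then 1 else 0))"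
    unfolding tuples_def
    by (subst prod_sum_PiE) (auto intro: finite_configs)
  finally show ?thesis .
qed

theorem corollary2p7:
  fixes \<epsilon> :: real and k l :: nat
  assumes "CARD('a) \<ge> 2" and "\<epsilon> > 0" and "k \<ge> 1" and "l \<ge> 1"
  shows "\<exists>\<delta>>0. \<exists>n0>(0::nat). \<forall>n>n0. \<forall>(\<mu> :: (nat \<Rightarrow> 'a::finite) \<Rightarrow> real) \<nu>.
           is_prob n \<mu> \<longrightarrow> is_prob n \<nu> \<longrightarrow> cut_dist n \<mu> \<nu> < \<delta> \<longrightarrow>
           (\<forall>f. intensive_obs n k l f \<longrightarrow> \<bar>expect n k \<mu> f - expect n k \<nu> f\<bar> < \<epsilon>)"
proof (intro exI[of _ "\<epsilon> / (real k * real l)"] conjI exI[of _ "1::nat"] allI impI)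
  have kl: "real k * real l > 0" using assms by simp
  show "\<epsilon> / (real k * real l) > 0" using assms kl by simp
  show "(0::nat) < 1" by simp
  fix n :: nat and \<mu> \<nu> :: "(nat \<Rightarrow> 'a) \<Rightarrow> real" and f :: "(nat \<Rightarrow> nat \<Rightarrow> 'a) \<Rightarrow> real"
  assume n: "1 < n" and pm: "is_prob n \<mu>" and pn: "is_prob n \<nu>"
    and cd: "cut_dist n \<mu> \<nu> < \<epsilon> / (real k * real l)" and fo: "intensive_obs n k l f"
  have n0: "real n > 0" using n by simp
  have ne: "couplings n \<mu> \<nu> \<noteq> {}"
  proof -
    have "(\<lambda>p. \<mu> (fst p) * \<nu> (snd p)) \<in> couplings n \<mu> \<nu>"
      using pm pn unfolding couplings_def is_prob_def
      by (auto simp: sum_distrib_left[symmetric] sum_distrib_right[symmetric])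
    then show ?thesis by blast
  qed
  have "(INF \<gamma>\<in>couplings n \<mu> \<nu>. cut_disc n \<gamma>) < real n * (\<epsilon> / (real k * real l))"
    using cd n0 unfolding cut_dist_def by (simp add: field_simps)
  then obtain \<gamma> where g: "\<gamma> \<in> couplings n \<mu> \<nu>"
    and gl: "cut_disc n \<gamma> < real n * (\<epsilon> / (real k * real l))"
    using cInf_lessD[of "cut_disc n ` couplings n \<mu> \<nu>"] ne by auto
  from fo obtain I :: "nat \<Rightarrow> nat set" and \<tau> :: "nat \<Rightarrow> nat \<Rightarrow> 'a" where
    I: "\<forall>m<l. I m \<subseteq> {..<n}" and f: "\<forall>\<sigma>\<in>tuples n k. f \<sigma> = (1 / real n ^ l) *
         (\<Sum>i\<in>PiE {..<l} I. \<Prod>j<k. (if (\<forall>m<l. \<sigma> j (i m) = \<tau> j m) then 1 else 0))"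
    unfolding intensive_obs_def by blast
  note mb = main_bound[OF pm pn g I, where k=k and \<tau>=\<tau>]
  have "\<bar>expect n k \<mu> f - expect n k \<nu> f\<bar> = (1 / real n ^ l) * \<bar>\<Sum>i\<in>PiE {..<l} I.
      (\<Prod>j<k. \<Sum>\<sigma>\<in>configs n. \<mu> \<sigma> * (\<Prod>m<l. if \<sigma> (i m) = \<tau> j m then 1 else 0))
    - (\<Prod>j<k. \<Sum>\<sigma>\<in>configs n. \<nu> \<sigma> * (\<Prod>m<l. if \<sigma> (i m) = \<tau> j m then 1 else 0))\<bar>"
    unfolding expect_eq[OF f, of \<mu>] expect_eq[OF f, of \<nu>]
    by (simp add: sum_subtractf diff_divide_distrib[symmetric] abs_divide)
  also have "\<dots> \<le> (1 / real n ^ l) * (real k * real l * real n ^ (l-1) * cut_disc n \<gamma>)"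
    using mb by (intro mult_left_mono) auto
  also have "\<dots> = real k * real l * cut_disc n \<gamma> / real n"
  proof -
    have "real n ^ l = real n * real n ^ (l-1)" using assms(4)
      by (metis Suc_diff_le diff_Suc_1 power_Suc)
    then show ?thesis using n0 by (simp add: field_simps)
  qed
  also have "\<dots> < real k * real l * (real n * (\<epsilon> / (real k * real l))) / real n"
    using gl kl n0 by (intro divide_strict_right_mono mult_strict_left_mono) auto
  also have "\<dots> = \<epsilon>"
  proof -
    have "real k * real l \<noteq> 0" "real n \<noteq> 0" "k > 0" "l > 0" using kl n0 assms by auto
    then show ?thesis by (simp add: field_simps)
  qed
  finally show "\<bar>expect n k \<mu> f - expect n k \<nu> f\<bar> < \<epsilon>" .
qed

end
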